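(* Let $R$ be a finite chain ring, $r\ge1$, $l\ge1$, and let $A_1,\dots,A_l\subseteq R$ be pairwise disjoint sets with $|A_i|=r+1$ such that $A=\bigcup_{i=1}^lA_i$ is well-conditioned. Let $g\in R[x]$ be an $(r,l)$-good polynomial on the blocks $A_1,\dots,A_l$. Let $1\le t\le l$, $n=(r+1)l$, $K=rt$. For $a=(a_{i,j})_{0\le i\le r-1,\,0\le j\le t-1}\in R^K$ put $$f_a(x)=\sum_{i=0}^{r-1}\sum_{j=0}^{t-1}a_{i,j}\,g(x)^jx^i,$$ and let $\mathcal C=\{(f_a(\alpha))_{\alpha\in A}: a\in R^K\}\subseteq R^n$ (coordinates indexed by $A$ in a fixed order). Then $\mathcal C$ is a free $R$-linear code of length $n$ and rank $K$ (so $|\mathcal C|=|R|^K$), every coordinate $\alpha\in A_j$ has the recovering set $A_j\setminus\{\alpha\}$ (so $\mathcal C$ has locality $r$), and its minimum distance is $$d=n-K-\frac{K}{r}+2 .$$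
   Context: A finite chain ring is a finite commutative local ring whose ideals are totally ordered by inclusion. $N(R)$ denotes the group of units of $R$. A subset $T\subseteq N(R)$ is subtractive if $a-b\in N(R)$ for all distinct $a,b\in T$. A set $\{a_1,\dots,a_n\}\subseteq R$ is well-conditioned if either it is a subtractive subset of $N(R)$, or for some $i$ the set $\{a_1,\dots,a_n\}\setminus\{a_i\}$ is a subtractive subset of $N(R)$ and $a_i$ is a zero divisor (or $a_i=0$). Given pairwise disjoint subsets $A_1,\dots,A_l\subseteq R$ of size $r+1$, a polynomial $g\in R[x]$ is $(r,l)$-good on the blocks $A_1,\dots,A_l$ if it has degree $r+1$, its leading coefficient is a unit, and it is constant on each $A_i$. A coordinate $i$ has locality $r$ if there is a set $S_i$ of at most $r$ other coordinates with $|\mathcal C_{S_i}|=|\mathcal C_{S_i\cup\{i\}}|$ (puncturing to the indicated coordinates). *)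

theory Defs
  imports "HOL-Computational_Algebra.Polynomial" "HOL-Library.FuncSet"
begin

definition units_of_ring :: "'a::comm_ring_1 set" where
  "units_of_ring = {u. u dvd 1}"

definition is_ideal :: "'a::comm_ring_1 set \<Rightarrow> bool" where
  "is_ideal I \<longleftrightarrow> 0 \<in> I \<and> (\<forall>x\<in>I. \<forall>y\<in>I. x + y \<in> I) \<and> (\<forall>x\<in>I. \<forall>s. s * x \<in> I)"

text \<open>A chain ring: commutative local ring whose ideals are totally ordered by inclusion.
  Finiteness is imposed via the type class finite in the theorem.\<close>
definition chain_ring :: "'a::comm_ring_1 itself \<Rightarrow> bool" where
  "chain_ring _ \<longleftrightarrow>
     (\<forall>x y::'a. \<not> x dvd 1 \<longrightarrow> \<not> y dvd 1 \<longrightarrow> \<not> (x + y) dvd 1) \<and>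
     (\<forall>I J::'a set. is_ideal I \<longrightarrow> is_ideal J \<longrightarrow> I \<subseteq> J \<or> J \<subseteq> I)"

definition subtractive :: "'a::comm_ring_1 set \<Rightarrow> bool" where
  "subtractive T \<longleftrightarrow> T \<subseteq> units_of_ring \<and>
     (\<forall>a\<in>T. \<forall>b\<in>T. a \<noteq> b \<longrightarrow> a - b \<in> units_of_ring)"

definition zero_divisor :: "'a::comm_ring_1 \<Rightarrow> bool" where
  "zero_divisor a \<longleftrightarrow> (\<exists>b. b \<noteq> 0 \<and> a * b = 0)"

definition well_conditioned :: "'a::comm_ring_1 set \<Rightarrow> bool" where
  "well_conditioned A \<longleftrightarrow> subtractive A \<or>
     (\<exists>a\<in>A. subtractive (A - {a}) \<and> (zero_divisor a \<or> a = 0))"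

definition good_poly :: "nat \<Rightarrow> nat \<Rightarrow> (nat \<Rightarrow> 'a::comm_ring_1 set) \<Rightarrow> 'a poly \<Rightarrow> bool" where
  "good_poly r l B g \<longleftrightarrow> degree g = r + 1 \<and> lead_coeff g \<in> units_of_ring \<and>
     (\<forall>i\<in>{1..l}. \<forall>x\<in>B i. \<forall>y\<in>B i. poly g x = poly g y)"

text \<open>Codewords are functions on the coordinate set A (value 0 outside A).\<close>
definition enc_poly :: "nat \<Rightarrow> nat \<Rightarrow> 'a::comm_ring_1 poly \<Rightarrow> (nat \<Rightarrow> nat \<Rightarrow> 'a) \<Rightarrow> 'a poly" where
  "enc_poly r t g a = (\<Sum>i<r. \<Sum>j<t. smult (a i j) (g ^ j * monom 1 i))"

definition tamo_barg_code :: "'a::comm_ring_1 set \<Rightarrow> nat \<Rightarrow> nat \<Rightarrow> 'a poly \<Rightarrow> ('a \<Rightarrow> 'a) set" where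
  "tamo_barg_code A r t g =
     {(\<lambda>\<alpha>. if \<alpha> \<in> A then poly (enc_poly r t g a) \<alpha> else 0) | a. True}"

definition puncture :: "('a \<Rightarrow> 'b::zero) set \<Rightarrow> 'a set \<Rightarrow> ('a \<Rightarrow> 'b) set" where
  "puncture C S = (\<lambda>c. \<lambda>\<alpha>. if \<alpha> \<in> S then c \<alpha> else 0) ` C"

definition recovering_set :: "('a \<Rightarrow> 'b::zero) set \<Rightarrow> 'a \<Rightarrow> 'a set \<Rightarrow> bool" where
  "recovering_set C i S \<longleftrightarrow> i \<notin> S \<and> card (puncture C S) = card (puncture C (insert i S))"

definition has_locality :: "('a \<Rightarrow> 'b::zero) set \<Rightarrow> 'a set \<Rightarrow> nat \<Rightarrow> bool" where
  "has_locality C A r \<longleftrightarrow>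
     (\<forall>i\<in>A. \<exists>S. S \<subseteq> A - {i} \<and> card S \<le> r \<and> recovering_set C i S)"

definition hamming_dist :: "'a set \<Rightarrow> ('a \<Rightarrow> 'b) \<Rightarrow> ('a \<Rightarrow> 'b) \<Rightarrow> nat" where
  "hamming_dist A c c' = card {\<alpha>\<in>A. c \<alpha> \<noteq> c' \<alpha>}"

definition min_dist :: "'a set \<Rightarrow> ('a \<Rightarrow> 'b) set \<Rightarrow> nat" where
  "min_dist A C = Min {hamming_dist A c c' | c c'. c \<in> C \<and> c' \<in> C \<and> c \<noteq> c'}"

definition linear_code :: "'a set \<Rightarrow> ('a \<Rightarrow> 'b::comm_ring_1) set \<Rightarrow> bool" where
  "linear_code A C \<longleftrightarrow> (\<forall>c\<in>C. \<forall>\<alpha>. \<alpha> \<notin> A \<longrightarrow> c \<alpha> = 0) \<and> (\<lambda>_. 0) \<in> C \<and>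
     (\<forall>c\<in>C. \<forall>c'\<in>C. (\<lambda>\<alpha>. c \<alpha> + c' \<alpha>) \<in> C) \<and> (\<forall>s. \<forall>c\<in>C. (\<lambda>\<alpha>. s * c \<alpha>) \<in> C)"

definition free_rank :: "('a \<Rightarrow> 'b::comm_ring_1) set \<Rightarrow> nat \<Rightarrow> bool" where
  "free_rank C K \<longleftrightarrow> (\<exists>b::nat \<Rightarrow> 'a \<Rightarrow> 'b. (\<forall>k<K. b k \<in> C) \<and>
     (\<forall>c\<in>C. \<exists>!w. w \<in> {..<K} \<rightarrow>\<^sub>E UNIV \<and> c = (\<lambda>\<alpha>. \<Sum>k<K. w k * b k \<alpha>)))"

end

theory Submission
  imports Defs
begin


lemma unit_mult1: "a dvd 1 \<Longrightarrow> b dvd 1 \<Longrightarrow> (a * b :: 'a::comm_ring_1) dvd 1"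
  using mult_dvd_mono[of a 1 b 1] by simp

lemma unit_prod_set: "finite S \<Longrightarrow> (\<And>x. x \<in> S \<Longrightarrow> f x dvd 1) \<Longrightarrow> prod f S dvd 1"
  for f :: "_ \<Rightarrow> 'a::comm_ring_1"
  by (induction S rule: finite_induct) (auto intro: mult_dvd_mono[where ?b=1 and ?d=1, simplified])

lemma monic_mult_degree:
  fixes P q :: "'a::comm_ring_1 poly"
  assumes "lead_coeff P = 1" "q \<noteq> 0"
  shows "degree (P * q) = degree P + degree q \<and> lead_coeff (P * q) = lead_coeff q"
proof -
  have c: "coeff (P * q) (degree P + degree q) = lead_coeff q"
    using coeff_mult_degree_sum[of P q] assms by simp
  have "lead_coeff q \<noteq> 0" using assms by simp
  hence "degree P + degree q \<le> degree (P * q)" using c by (intro le_degree) simp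
  moreover have "degree (P * q) \<le> degree P + degree q" by (rule degree_mult_le)
  ultimately have d: "degree (P * q) = degree P + degree q" by simp
  thus ?thesis using c by simp
qed

lemma monic_prod_lin:
  fixes S :: "'a::comm_ring_1 set"
  assumes "finite S"
  shows "degree (\<Prod>b\<in>S. [:-b,1:]) = card S \<and> lead_coeff (\<Prod>b\<in>S. [:-b,1:]) = 1"
  using assms
proof (induction S rule: finite_induct)
  case empty thus ?case by simp
next
  case (insert x F)
  let ?P = "\<Prod>b\<in>F. [:-b,1:]"
  have nz: "?P \<noteq> 0"
  proof
    assume "?P = 0" hence "lead_coeff ?P = 0" by simp
    thus False using insert.IH using one_neq_zero by metis
  qed
  have m: "lead_coeff [:-x,1:] = 1" "degree [:-x,1:] = 1" by simp_all
  have e1: "degree ([:-x,1:]*?P) = degree [:-x,1:] + degree ?P"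
    and e2: "lead_coeff ([:-x,1:]*?P) = lead_coeff ?P"
    using monic_mult_degree[OF m(1) nz] by blast+
  have d: "degree ([:-x,1:]*?P) = card (insert x F)"
    using e1 m(2) insert.IH insert.hyps by simp
  have l: "lead_coeff ([:-x,1:]*?P) = 1" using trans[OF e2 insert.IH[THEN conjunct2]] .
  show ?case unfolding prod.insert[OF insert.hyps] using d l by simp
qed

definition udiff :: "'a::comm_ring_1 set \<Rightarrow> bool" where
  "udiff S \<longleftrightarrow> (\<forall>x\<in>S. \<forall>y\<in>S. x \<noteq> y \<longrightarrow> (x - y) dvd 1)"

lemma udiff_subset: "udiff S \<Longrightarrow> T \<subseteq> S \<Longrightarrow> udiff T"
  unfolding udiff_def by blast

lemma roots_dvd:
  fixes p :: "'a::comm_ring_1 poly"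
  assumes "finite S" "udiff S" "\<forall>x\<in>S. poly p x = 0"
  shows "\<exists>q. p = (\<Prod>b\<in>S. [:-b,1:]) * q"
  using assms
proof (induction S arbitrary: p rule: finite_induct)
  case empty thus ?case by simp
next
  case (insert s F)
  have "[:-s,1:] dvd p" using insert.prems poly_eq_0_iff_dvd by auto
  then obtain q where q: "p = [:-s,1:] * q" by (auto elim: dvdE)
  have "\<forall>x\<in>F. poly q x = 0"
  proof
    fix x assume x: "x \<in> F"
    have "poly p x = (x - s) * poly q x" by (simp only: q poly_mult) (simp add: algebra_simps)
    hence "(x - s) * poly q x = 0" using insert.prems x by auto
    moreover have "(x - s) dvd 1" using insert.prems(1) x insert.hyps unfolding udiff_def by auto
    ultimately obtain w where w: "1 = (x - s) * w" and z: "(x - s) * poly q x = 0" by (auto elim: dvdE)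
    have "poly q x = ((x - s) * w) * poly q x" using w by simp
    also have "\<dots> = w * ((x - s) * poly q x)" by (simp add: ac_simps)
    finally show "poly q x = 0" using z by simp
  qed
  moreover have "udiff F" using insert.prems udiff_subset by blast
  ultimately obtain q' where q': "q = (\<Prod>b\<in>F. [:-b,1:]) * q'" using insert.IH by blast
  have "p = (\<Prod>b\<in>insert s F. [:-b,1:]) * q'"
    unfolding prod.insert[OF insert.hyps] by (simp only: q q' mult.assoc)
  thus ?case by blast
qed

lemma roots_zero:
  fixes p :: "'a::comm_ring_1 poly"
  assumes "finite S" "udiff S" "\<forall>x\<in>S. poly p x = 0" "degree p < card S"
  shows "p = 0"
proof (rule ccontr)
  assume nz: "p \<noteq> 0"
  obtain q where q: "p = (\<Prod>b\<in>S. [:-b,1:]) * q" using roots_dvd assms by blast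
  have qn: "q \<noteq> 0" using q nz by auto
  have "degree ((\<Prod>b\<in>S. [:-b,1:]) * q) = degree (\<Prod>b\<in>S. [:-b,1:]) + degree q"
    using monic_mult_degree[OF monic_prod_lin[OF assms(1), THEN conjunct2] qn] by blast
  hence "degree p = card S + degree q" by (simp only: q[symmetric] monic_prod_lin[OF assms(1), THEN conjunct1])
  thus False using assms by simp
qed


lemma wc_udiff:
  assumes R: "chain_ring TYPE('a::comm_ring_1)" and wc: "well_conditioned (A::'a set)"
  shows "udiff A"
proof -
  have loc: "\<And>x y::'a. \<not> x dvd 1 \<Longrightarrow> \<not> y dvd 1 \<Longrightarrow> \<not> (x + y) dvd 1"
    using R unfolding chain_ring_def by blast
  show ?thesis
  proof (cases "subtractive A")
    case True thus ?thesis unfolding subtractive_def udiff_def units_of_ring_def by blast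
  next
    case False
    then obtain a0 where a0: "a0 \<in> A" "subtractive (A - {a0})" "zero_divisor a0 \<or> a0 = 0"
      using wc unfolding well_conditioned_def by blast
    have nu: "\<not> a0 dvd 1"
    proof
      assume u: "a0 dvd 1"
      show False
      proof (cases "a0 = 0")
        case True thus False using u by simp
      next
        case False
        then obtain b where b: "b \<noteq> 0" "a0 * b = 0" using a0(3) unfolding zero_divisor_def by blast
        obtain w where "1 = a0 * w" using u by (auto elim: dvdE)
        hence "b = (a0 * b) * w" by (metis mult.assoc mult.commute mult_1)
        thus False using b by simp
      qed
    qed
    have key: "\<And>x. x \<in> A \<Longrightarrow> x \<noteq> a0 \<Longrightarrow> (x - a0) dvd 1"
    proof -
      fix x assume x: "x \<in> A" "x \<noteq> a0"
      hence ux: "x dvd 1" using a0(2) unfolding subtractive_def units_of_ring_def by blast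
      show "(x - a0) dvd 1"
      proof (rule ccontr)
        assume "\<not> (x - a0) dvd 1"
        hence "\<not> ((x - a0) + a0) dvd 1" using loc nu by blast
        thus False using ux by simp
      qed
    qed
    show ?thesis unfolding udiff_def
    proof (intro ballI impI)
      fix x y assume xy: "x \<in> A" "y \<in> A" "x \<noteq> y"
      show "(x - y) dvd 1"
      proof (cases "x = a0 \<or> y = a0")
        case True
        show ?thesis
        proof (cases "x = a0")
          case True
          hence "(y - a0) dvd 1" using key xy by auto
          hence "(a0 - y) dvd 1" by (metis minus_diff_eq minus_dvd_iff)
          thus ?thesis using True by simp
        next
          case False thus ?thesis using key xy True by auto
        qed
      next
        case False
        thus ?thesis using a0(2) xy unfolding subtractive_def units_of_ring_def by blast
      qed
    qed
  qed
qed

locale tb =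
  fixes B :: "nat \<Rightarrow> 'a::{comm_ring_1,finite} set" and g :: "'a poly" and r l t :: nat
  assumes r: "r \<ge> 1" and l: "l \<ge> 1"
    and disj: "\<forall>i\<in>{1..l}. \<forall>j\<in>{1..l}. i \<noteq> j \<longrightarrow> B i \<inter> B j = {}"
    and cardB: "\<forall>i\<in>{1..l}. card (B i) = r + 1"
    and ud: "udiff (\<Union>i\<in>{1..l}. B i)"
    and good: "good_poly r l B g"
    and t: "1 \<le> t" "t \<le> l"
begin

definition "A = (\<Union>i\<in>{1..l}. B i)"
definition "ev a x = (\<Sum>i<r. \<Sum>j<t. a i j * poly g x ^ j * x ^ i)"
definition "cw a = (\<lambda>x. if x \<in> A then ev a x else 0)"
definition "cval m = poly g (SOME x. x \<in> B m)"
definition "bp a v = (\<Sum>i<r. monom (\<Sum>j<t. a i j * v ^ j) i)"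

lemma udA: "udiff A" using ud A_def by simp

lemma finA: "finite A" by simp

lemma BA: "m \<in> {1..l} \<Longrightarrow> B m \<subseteq> A" unfolding A_def by blast

lemma cardA: "card A = (r+1) * l"
proof -
  have "card A = (\<Sum>i\<in>{1..l}. card (B i))" unfolding A_def
    by (rule card_UN_disjoint) (use disj in auto)
  also have "\<dots> = (\<Sum>i\<in>{1..l}. r + 1)" using cardB by simp
  finally show ?thesis by simp
qed

lemma poly_enc: "poly (enc_poly r t g a) x = ev a x"
  unfolding enc_poly_def ev_def by (simp add: poly_sum poly_monom mult.assoc)

lemma code_eq: "tamo_barg_code A r t g = range cw"
  unfolding tamo_barg_code_def cw_def poly_enc by auto

lemma Bne: "m \<in> {1..l} \<Longrightarrow> B m \<noteq> {}"
proof
  assume "m \<in> {1..l}" "B m = {}"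
  thus False using cardB by (metis card.empty add_is_0 one_neq_zero)
qed

lemma cval: "m \<in> {1..l} \<Longrightarrow> x \<in> B m \<Longrightarrow> poly g x = cval m"
proof -
  assume m: "m \<in> {1..l}" and x: "x \<in> B m"
  have "(SOME x. x \<in> B m) \<in> B m" using x by (rule someI)
  thus ?thesis using good m x unfolding good_poly_def cval_def by blast
qed

lemma ev_bp: "poly g x = v \<Longrightarrow> ev a x = poly (bp a v) x"
  unfolding ev_def bp_def by (simp add: poly_sum poly_monom sum_distrib_right mult.assoc)

lemma deg_bp: "degree (bp a v) < r"
proof -
  have "degree (bp a v) \<le> r - 1" unfolding bp_def
    by (rule degree_sum_le) (auto intro: order.trans[OF degree_monom_le])
  thus ?thesis using r by simp
qed

lemma coeff_bp: "coeff (bp a v) k = (if k < r then (\<Sum>j<t. a k j * v ^ j) else 0)"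
  unfolding bp_def by (simp add: coeff_sum coeff_monom)

end
context tb begin

lemma degg: "degree g = r + 1" and lcg: "lead_coeff g dvd 1"
  using good unfolding good_poly_def units_of_ring_def by auto

lemma cdiff:
  assumes m: "m \<in> {1..l}" and m': "m' \<in> {1..l}" and ne: "m \<noteq> m'" and x: "x \<in> B m"
  shows "(poly g x - cval m') dvd 1"
proof -
  define h where "h = g - [:cval m':]"
  have dh: "degree h = r + 1"
  proof -
    have "h = g + (- [:cval m':])" unfolding h_def by simp
    moreover have "degree (- [:cval m':]) < degree g" using degg by simp
    ultimately show ?thesis using degree_add_eq_left degg by metis
  qed
  have lh: "lead_coeff h = lead_coeff g" using dh degg unfolding h_def by simp
  have fin: "finite (B m')" by simp
  have udB: "udiff (B m')" using udA BA[OF m'] udiff_subset by blast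
  have roots: "\<forall>y\<in>B m'. poly h y = 0" using cval[OF m'] unfolding h_def by simp
  obtain q where q: "h = (\<Prod>b\<in>B m'. [:-b,1:]) * q" using roots_dvd[OF fin udB roots] by blast
  have hnz: "h \<noteq> 0" using lh lcg by auto
  hence qnz: "q \<noteq> 0" using q by auto
  have mp: "degree (\<Prod>b\<in>B m'. [:-b,1:]) = r + 1" "lead_coeff (\<Prod>b\<in>B m'. [:-b,1:]) = 1"
    using monic_prod_lin[OF fin] cardB m' by auto
  have e: "degree h = degree (\<Prod>b\<in>B m'. [:-b,1:]) + degree q" "lead_coeff h = lead_coeff q"
    using monic_mult_degree[OF mp(2) qnz] unfolding q[symmetric] by blast+
  hence dq: "degree q = 0" using mp dh by simp
  hence uq: "coeff q 0 dvd 1" using e lh lcg by simp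
  have pq: "poly q x = coeff q 0" using dq by (simp add: poly_altdef)
  have xn: "x \<notin> B m'" using disj m m' ne x by blast
  have "(\<Prod>b\<in>B m'. x - b) dvd 1"
  proof (rule unit_prod_set[OF fin])
    fix b assume b: "b \<in> B m'"
    hence "x \<noteq> b" using xn by auto
    thus "(x - b) dvd 1" using udA BA[OF m] BA[OF m'] x b unfolding udiff_def by blast
  qed
  moreover have "poly h x = (\<Prod>b\<in>B m'. x - b) * coeff q 0"
    by (simp only: q poly_mult pq poly_prod) simp
  ultimately have "poly h x dvd 1" using uq by (simp add: unit_mult1)
  thus ?thesis unfolding h_def by simp
qed

lemma cval_unit: "m \<in> {1..l} \<Longrightarrow> m' \<in> {1..l} \<Longrightarrow> m \<noteq> m' \<Longrightarrow> (cval m - cval m') dvd 1"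
  using cdiff cval Bne by (metis all_not_in_conv)

lemma udiff_cval: "udiff (cval ` {1..l})"
  unfolding udiff_def using cval_unit by fastforce

lemma cval_inj: "inj_on cval {1..l}"
proof (rule inj_onI)
  fix m m' assume "m \<in> {1..l}" "m' \<in> {1..l}" "cval m = cval m'"
  thus "m = m'" using cval_unit by (metis right_minus_eq dvd_0_left_iff zero_neq_one)
qed

end
context tb begin

lemma ev_add: "ev (\<lambda>i j. a i j + a' i j) x = ev a x + ev a' x"
  unfolding ev_def by (simp add: distrib_right sum.distrib)

lemma ev_diff: "ev (\<lambda>i j. a i j - a' i j) x = ev a x - ev a' x"
  unfolding ev_def by (simp add: left_diff_distrib sum_subtractf)

lemma ev_smul: "ev (\<lambda>i j. s * a i j) x = s * ev a x"
  unfolding ev_def by (simp add: sum_distrib_left mult.assoc)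

lemma ev_zero: "ev (\<lambda>i j. 0) x = 0"
  unfolding ev_def by simp

lemma ev_cong: "(\<And>i j. i < r \<Longrightarrow> j < t \<Longrightarrow> a i j = a' i j) \<Longrightarrow> ev a x = ev a' x"
  unfolding ev_def by (intro sum.cong refl) auto

lemma linear: "linear_code A (range cw)"
  unfolding linear_code_def
proof (intro conjI ballI allI impI)
  show "\<And>c \<alpha>. c \<in> range cw \<Longrightarrow> \<alpha> \<notin> A \<Longrightarrow> c \<alpha> = 0" unfolding cw_def by auto
  have "cw (\<lambda>i j. 0) = (\<lambda>_. 0)" unfolding cw_def using ev_zero by auto
  thus "(\<lambda>_. 0) \<in> range cw" by (metis rangeI)
next
  fix c c' assume "c \<in> range cw" "c' \<in> range cw"
  then obtain a a' where "c = cw a" "c' = cw a'" by auto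
  hence "(\<lambda>\<alpha>. c \<alpha> + c' \<alpha>) = cw (\<lambda>i j. a i j + a' i j)" unfolding cw_def using ev_add by auto
  thus "(\<lambda>\<alpha>. c \<alpha> + c' \<alpha>) \<in> range cw" by simp
next
  fix s c assume "c \<in> range cw"
  then obtain a where "c = cw a" by auto
  hence "(\<lambda>\<alpha>. s * c \<alpha>) = cw (\<lambda>i j. s * a i j)" unfolding cw_def using ev_smul by auto
  thus "(\<lambda>\<alpha>. s * c \<alpha>) \<in> range cw" by simp
qed

lemma ev_zero_imp:
  assumes z: "\<forall>x\<in>A. ev a x = 0"
  shows "\<forall>i<r. \<forall>j<t. a i j = 0"
proof (intro allI impI)
  fix i j assume i: "i < r" and j: "j < t"
  have bz: "\<And>m. m \<in> {1..l} \<Longrightarrow> (\<Sum>j<t. a i j * cval m ^ j) = 0"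
  proof -
    fix m assume m: "m \<in> {1..l}"
    have "\<forall>x\<in>B m. poly (bp a (cval m)) x = 0"
    proof
      fix x assume x: "x \<in> B m"
      hence "ev a x = 0" using z BA[OF m] by auto
      thus "poly (bp a (cval m)) x = 0" using ev_bp[OF cval[OF m x]] by simp
    qed
    moreover have "degree (bp a (cval m)) < card (B m)" using deg_bp[of a "cval m"] cardB m by simp
    moreover have "udiff (B m)" using udA BA[OF m] udiff_subset by blast
    ultimately have "bp a (cval m) = 0" by (intro roots_zero[of "B m"]) auto
    hence "coeff (bp a (cval m)) i = 0" by simp
    thus "(\<Sum>j<t. a i j * cval m ^ j) = 0" using coeff_bp[of a "cval m" i] i by simp
  qed
  define P where "P = (\<Sum>j<t. monom (a i j) j)"
  have "\<forall>v\<in>cval ` {1..l}. poly P v = 0"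
    using bz unfolding P_def by (auto simp: poly_sum poly_monom)
  moreover have "card (cval ` {1..l}) = l" using card_image[OF cval_inj] by simp
  moreover have "degree P < t"
  proof -
    have "degree P \<le> t - 1" unfolding P_def
      by (rule degree_sum_le) (auto intro: order.trans[OF degree_monom_le])
    thus ?thesis using t by simp
  qed
  ultimately have "P = 0" using roots_zero[OF _ udiff_cval] t by simp
  hence "coeff P j = 0" by simp
  thus "a i j = 0" unfolding P_def using j by (simp add: coeff_sum coeff_monom)
qed

lemma deg_enc: "degree (enc_poly r t g a) \<le> (t - 1) * (r + 1) + (r - 1)"
  unfolding enc_poly_def
proof (intro degree_sum_le)
  fix i j assume i: "i \<in> {..<r}" and j: "j \<in> {..<t}"
  have "degree (smult (a i j) (g ^ j * monom 1 i)) \<le> degree (g ^ j) + degree (monom (1::'a) i)"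
    by (rule order.trans[OF degree_smult_le degree_mult_le])
  also have "\<dots> \<le> (r + 1) * j + i"
    using degree_power_le[of g j] degree_monom_le[of "1::'a" i] degg by simp
  also have "\<dots> \<le> (r + 1) * (t - 1) + (r - 1)"
    using i j by (intro add_mono mult_le_mono2) auto
  finally show "degree (smult (a i j) (g ^ j * monom 1 i)) \<le> (t - 1) * (r + 1) + (r - 1)"
    by (simp add: mult.commute)
qed simp_all

lemma dist_lower:
  assumes ne: "cw a \<noteq> cw a'"
  shows "(r+1)*l - ((t - 1) * (r + 1) + (r - 1)) \<le> hamming_dist A (cw a) (cw a')"
proof -
  define f where "f = enc_poly r t g (\<lambda>i j. a i j - a' i j)"
  have pf: "\<And>x. poly f x = ev a x - ev a' x" unfolding f_def poly_enc ev_diff ..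
  obtain x where x: "x \<in> A" "ev a x \<noteq> ev a' x" using ne unfolding cw_def by (auto simp: fun_eq_iff split: if_splits)
  have fnz: "f \<noteq> 0" using pf x by (metis poly_0 right_minus_eq)
  define Z where "Z = {x\<in>A. ev a x = ev a' x}"
  have ZA: "Z \<subseteq> A" unfolding Z_def by auto
  have "card Z \<le> degree f"
  proof (rule ccontr)
    assume "\<not> card Z \<le> degree f"
    hence "degree f < card Z" by simp
    moreover have "\<forall>x\<in>Z. poly f x = 0" using pf unfolding Z_def by simp
    ultimately have "f = 0" using roots_zero[of Z f] udiff_subset[OF udA ZA] by simp
    thus False using fnz by simp
  qed
  hence cZ: "card Z \<le> (t - 1) * (r + 1) + (r - 1)" using deg_enc[of "\<lambda>i j. a i j - a' i j"] f_def by simp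
  have "{x\<in>A. cw a x \<noteq> cw a' x} = A - Z" unfolding Z_def cw_def by auto
  hence "hamming_dist A (cw a) (cw a') = card A - card Z"
    unfolding hamming_dist_def using card_Diff_subset[OF _ ZA] finite_subset[OF ZA] by simp
  thus ?thesis using cZ cardA by simp
qed

end
context tb begin

lemma poly_lt: "degree (p::'a poly) < N \<Longrightarrow> poly p x = (\<Sum>i<N. coeff p i * x ^ i)"
proof -
  assume d: "degree p < N"
  have "poly p x = (\<Sum>i\<le>degree p. coeff p i * x ^ i)" by (rule poly_altdef)
  also have "\<dots> = (\<Sum>i<N. coeff p i * x ^ i)"
    using d by (intro sum.mono_neutral_left) (auto simp: coeff_eq_0)
  finally show ?thesis .
qed

lemma dist_upper:
  "\<exists>a. cw a \<noteq> cw (\<lambda>i j. 0) \<and>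
     hamming_dist A (cw a) (cw (\<lambda>i j. 0)) \<le> (r+1)*l - ((t - 1) * (r + 1) + (r - 1))"
proof -
  have tl: "t \<in> {1..l}" using t by simp
  have "r - 1 \<le> card (B t)" using cardB tl by simp
  then obtain S where S: "S \<subseteq> B t" "card S = r - 1" "finite S"
    by (rule obtain_subset_with_card_n)
  define Q where "Q = (\<Prod>b\<in>S. [:-b,1:])"
  define P where "P = (\<Prod>m\<in>{1..<t}. [:-cval m,1:])"
  have dQ: "degree Q < r"
  proof -
    have "degree Q = card S" unfolding Q_def using monic_prod_lin[OF S(3)] by blast
    thus ?thesis using r S by simp
  qed
  have dP: "degree P < t"
  proof -
    have "degree P \<le> (\<Sum>m\<in>{1..<t}. degree [:-cval m,1:])" unfolding P_def
      using degree_prod_sum_le[of "{1..<t}" "\<lambda>m. [:-cval m,1:]"] by (simp add: o_def)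
    also have "\<dots> = t - 1" by simp
    finally show ?thesis using t by simp
  qed
  define a0 where "a0 = (\<lambda>i j. coeff Q i * coeff P j)"
  have eva: "\<And>x. ev a0 x = poly Q x * poly P (poly g x)"
  proof -
    fix x
    have "ev a0 x = (\<Sum>i<r. \<Sum>j<t. (coeff Q i * x ^ i) * (coeff P j * poly g x ^ j))"
      unfolding ev_def a0_def by (intro sum.cong refl) (simp add: ac_simps)
    also have "\<dots> = (\<Sum>i<r. coeff Q i * x ^ i) * (\<Sum>j<t. coeff P j * poly g x ^ j)"
      by (simp add: sum_product)
    finally show "ev a0 x = poly Q x * poly P (poly g x)"
      using poly_lt[OF dQ, of x] poly_lt[OF dP, of "poly g x"] by simp
  qed
  define Z0 where "Z0 = (\<Union>m\<in>{1..<t}. B m) \<union> S"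
  have Z0A: "Z0 \<subseteq> A" unfolding Z0_def
  proof (intro Un_least UN_least)
    fix m assume "m \<in> {1..<t}" hence "m \<in> {1..l}" using t by auto
    thus "B m \<subseteq> A" by (rule BA)
  next
    show "S \<subseteq> A" using S BA[OF tl] by auto
  qed
  have z: "\<And>x. x \<in> Z0 \<Longrightarrow> ev a0 x = 0"
  proof -
    fix x assume "x \<in> Z0"
    then consider (a) m where "m \<in> {1..<t}" "x \<in> B m" | (b) "x \<in> S" unfolding Z0_def by blast
    thus "ev a0 x = 0"
    proof cases
      case a
      have m: "m \<in> {1..l}" using a t by auto
      have "poly P (poly g x) = (\<Prod>m'\<in>{1..<t}. cval m - cval m')"
        unfolding P_def poly_prod cval[OF m a(2)] by simp
      also have "\<dots> = 0" using a by (intro prod_zero) auto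
      finally show ?thesis using eva by simp
    next
      case b
      have "poly Q x = (\<Prod>b\<in>S. x - b)" unfolding Q_def poly_prod by simp
      also have "\<dots> = 0" using b S by (intro prod_zero) auto
      finally show ?thesis using eva by simp
    qed
  qed
  have cZ0: "card Z0 = (t - 1) * (r + 1) + (r - 1)"
  proof -
    have d1: "(\<Union>m\<in>{1..<t}. B m) \<inter> S = {}"
    proof -
      have "\<And>m. m \<in> {1..<t} \<Longrightarrow> B m \<inter> B t = {}" using disj t by auto
      thus ?thesis using S by blast
    qed
    have "card (\<Union>m\<in>{1..<t}. B m) = (\<Sum>m\<in>{1..<t}. card (B m))"
      by (rule card_UN_disjoint) (use disj t in auto)
    also have "\<dots> = (\<Sum>m\<in>{1..<t}. r + 1)" using cardB t by (intro sum.cong) auto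
    finally have "card (\<Union>m\<in>{1..<t}. B m) = (t - 1) * (r + 1)" by simp
    thus ?thesis unfolding Z0_def using card_Un_disjoint[OF _ _ d1] S by simp
  qed
  have "card S < card (B t)" using S cardB tl r by simp
  then obtain x0 where x0: "x0 \<in> B t" "x0 \<notin> S" using S by (metis psubsetI psubset_card_mono subsetI card_mono finite_subset less_le_not_le)
  have x0A: "x0 \<in> A" using BA[OF tl] x0 by auto
  have "ev a0 x0 dvd 1"
  proof -
    have u1: "poly Q x0 dvd 1" unfolding Q_def poly_prod
    proof (rule unit_prod_set[OF S(3)])
      fix b assume b: "b \<in> S"
      hence "x0 \<noteq> b" "b \<in> A" using x0 S BA[OF tl] by auto
      thus "poly [:-b,1:] x0 dvd 1" using udA x0A unfolding udiff_def by simp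
    qed
    have u2: "poly P (poly g x0) dvd 1" unfolding P_def poly_prod cval[OF tl x0(1)]
    proof (rule unit_prod_set)
      fix m assume m: "m \<in> {1..<t}"
      thus "poly [:-cval m,1:] (cval t) dvd 1" using cval_unit[OF tl, of m] t by simp
    qed simp
    show ?thesis using eva unit_mult1[OF u1 u2] by simp
  qed
  hence nz: "ev a0 x0 \<noteq> 0" by auto
  have ne: "cw a0 \<noteq> cw (\<lambda>i j. 0)"
  proof
    assume "cw a0 = cw (\<lambda>i j. 0)"
    hence "cw a0 x0 = cw (\<lambda>i j. 0) x0" by simp
    thus False using nz x0A ev_zero unfolding cw_def by simp
  qed
  have "{x\<in>A. cw a0 x \<noteq> cw (\<lambda>i j. 0) x} \<subseteq> A - Z0"
    using z unfolding cw_def ev_zero by auto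
  hence "hamming_dist A (cw a0) (cw (\<lambda>i j. 0)) \<le> card (A - Z0)"
    unfolding hamming_dist_def by (intro card_mono) auto
  also have "\<dots> = card A - card Z0" using card_Diff_subset[OF _ Z0A] finite_subset[OF Z0A] by simp
  finally show ?thesis using ne cZ0 cardA by auto
qed

end

lemma sum_mod_div:
  fixes F :: "nat \<Rightarrow> nat \<Rightarrow> 'b::comm_monoid_add"
  assumes r: "0 < r"
  shows "(\<Sum>k<r*t. F (k mod r) (k div r)) = (\<Sum>i<r. \<Sum>j<t. F i j)"
proof -
  have bij: "bij_betw (\<lambda>k. (k mod r, k div r)) {..<r*t} ({..<r} \<times> {..<t})"
  proof (rule bij_betwI')
    fix x y assume "x \<in> {..<r*t}" "y \<in> {..<r*t}"
    show "((x mod r, x div r) = (y mod r, y div r)) = (x = y)"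
      by (metis div_mult_mod_eq prod.inject)
  next
    fix x assume "x \<in> {..<r*t}"
    thus "(x mod r, x div r) \<in> {..<r} \<times> {..<t}" using r
      by (auto simp: less_mult_imp_div_less mult.commute)
  next
    fix y assume y: "y \<in> {..<r} \<times> {..<t}"
    obtain i j where ij: "y = (i, j)" "i < r" "j < t" using y by auto
    have "j * r + i < r * t"
    proof -
      have "j * r + i < (j + 1) * r" using ij by simp
      also have "\<dots> \<le> t * r" using ij by (intro mult_le_mono1) simp
      finally show ?thesis by (simp add: mult.commute)
    qed
    moreover have "(j*r+i) mod r = i" "(j*r+i) div r = j" using ij r by auto
    ultimately show "\<exists>x\<in>{..<r*t}. y = (x mod r, x div r)" using ij(1) by (intro bexI[of _ "j*r+i"]) auto
  qed
  have "(\<Sum>k<r*t. F (k mod r) (k div r)) = (\<Sum>k<r*t. case_prod F (k mod r, k div r))" by simp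
  also have "\<dots> = sum (case_prod F) ({..<r} \<times> {..<t})" by (rule sum.reindex_bij_betw[OF bij])
  also have "\<dots> = (\<Sum>i<r. \<Sum>j<t. F i j)" by (rule sum.cartesian_product[symmetric])
  finally show ?thesis .
qed

context tb begin

lemma recov:
  assumes j: "j \<in> {1..l}" and al: "\<alpha> \<in> B j"
  shows "recovering_set (range cw) \<alpha> (B j - {\<alpha>})"
proof -
  define S where "S = B j - {\<alpha>}"
  define \<rho> where "\<rho> U c = (\<lambda>x::'a. if x \<in> U then c x else (0::'a))" for U c
  have pu: "\<And>U. puncture (range cw) U = \<rho> U ` range cw" unfolding puncture_def \<rho>_def by simp
  have ins: "insert \<alpha> S = B j" using al unfolding S_def by auto
  have SB: "S \<subseteq> B j" unfolding S_def by auto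
  have comp: "\<And>c. \<rho> S (\<rho> (B j) c) = \<rho> S c" using SB unfolding \<rho>_def by (auto simp: fun_eq_iff)
  have im: "\<rho> S ` (\<rho> (B j) ` range cw) = \<rho> S ` range cw" unfolding image_comp o_def comp ..
  have cS: "card S = r" using cardB j al unfolding S_def by simp
  have inj: "inj_on (\<rho> S) (\<rho> (B j) ` range cw)"
  proof (rule inj_onI)
    fix u v assume "u \<in> \<rho> (B j) ` range cw" "v \<in> \<rho> (B j) ` range cw" and e: "\<rho> S u = \<rho> S v"
    then obtain a a' where u: "u = \<rho> (B j) (cw a)" and v: "v = \<rho> (B j) (cw a')" by auto
    have BjA: "B j \<subseteq> A" by (rule BA[OF j])
    have onS: "\<And>y. y \<in> S \<Longrightarrow> ev a y = ev a' y"
    proof -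
      fix y assume y: "y \<in> S"
      hence "\<rho> S u y = \<rho> S v y" using e by simp
      moreover have yB: "y \<in> B j" using y SB by auto
      moreover have yA: "y \<in> A" using yB BjA by auto
      ultimately show "ev a y = ev a' y" using y unfolding u v \<rho>_def cw_def by simp
    qed
    define h where "h = bp a (cval j) - bp a' (cval j)"
    have ph: "\<And>y. y \<in> B j \<Longrightarrow> poly h y = ev a y - ev a' y"
      unfolding h_def using ev_bp[OF cval[OF j]] by simp
    have "degree h < card S"
      unfolding h_def cS by (rule le_less_trans[OF degree_diff_le_max]) (simp add: deg_bp)
    moreover have "\<forall>y\<in>S. poly h y = 0" using onS ph SB by auto
    moreover have "udiff S" using udA SB BjA udiff_subset by blast
    ultimately have "h = 0" by (intro roots_zero[of S]) auto
    hence "ev a \<alpha> = ev a' \<alpha>" using ph[OF al] by simp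
    hence eqB: "\<And>x. x \<in> B j \<Longrightarrow> ev a x = ev a' x" using onS unfolding S_def by blast
    show "u = v" unfolding u v \<rho>_def cw_def using eqB by (auto simp: fun_eq_iff)
  qed
  have "card (puncture (range cw) S) = card (puncture (range cw) (insert \<alpha> S))"
    unfolding pu ins im[symmetric] by (rule card_image[OF inj])
  moreover have "\<alpha> \<notin> S" unfolding S_def by simp
  ultimately show ?thesis unfolding recovering_set_def S_def by simp
qed

lemma locality: "has_locality (range cw) A r"
  unfolding has_locality_def
proof
  fix \<alpha> assume "\<alpha> \<in> A"
  then obtain j where j: "j \<in> {1..l}" "\<alpha> \<in> B j" unfolding A_def by auto
  have "B j - {\<alpha>} \<subseteq> A - {\<alpha>}" using BA[OF j(1)] by auto
  moreover have "card (B j - {\<alpha>}) \<le> r" using cardB j by simp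
  ultimately show "\<exists>S. S \<subseteq> A - {\<alpha>} \<and> card S \<le> r \<and> recovering_set (range cw) \<alpha> S"
    using recov[OF j] by blast
qed

definition "T x k = poly g x ^ (k div r) * x ^ (k mod r)"
definition "e k = (\<lambda>i j. if i = k mod r \<and> j = k div r then (1::'a) else 0)"
definition "aw w = (\<lambda>i j. w (j * r + i))"
definition "rep w = (\<lambda>x. \<Sum>k<r*t. w k * cw (e k) x)"

lemma ev_re: "ev a x = (\<Sum>k<r*t. a (k mod r) (k div r) * T x k)"
  unfolding ev_def T_def using sum_mod_div[of r "\<lambda>i j. a i j * poly g x ^ j * x ^ i" t] r
  by (simp add: mult.assoc)

lemma ev_e: "k < r*t \<Longrightarrow> ev (e k) x = T x k"
proof -
  assume k: "k < r*t"
  have "\<And>k'. e k (k' mod r) (k' div r) = (if k' = k then 1 else 0)"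
    unfolding e_def by (metis div_mult_mod_eq)
  hence "ev (e k) x = (\<Sum>k'<r*t. if k' = k then T x k' else 0)" unfolding ev_re
    by (intro sum.cong refl) simp
  also have "\<dots> = T x k" using k by simp
  finally show ?thesis .
qed

lemma rep_eq: "rep w = cw (aw w)"
proof
  fix x
  show "rep w x = cw (aw w) x"
  proof (cases "x \<in> A")
    case False thus ?thesis unfolding rep_def cw_def by simp
  next
    case True
    have "rep w x = (\<Sum>k<r*t. w k * T x k)" unfolding rep_def cw_def using True ev_e
      by (intro sum.cong) auto
    also have "\<dots> = ev (aw w) x" unfolding ev_re aw_def by simp
    finally show ?thesis unfolding cw_def using True by simp
  qed
qed

lemma idx: "i < r \<Longrightarrow> j < t \<Longrightarrow> j * r + i < r * t"
proof -
  assume ij: "i < r" "j < t"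
  have "j * r + i < (j + 1) * r" using ij by simp
  also have "\<dots> \<le> t * r" using ij by (intro mult_le_mono1) simp
  finally show ?thesis by (simp add: mult.commute)
qed

lemma rep_inj: "inj_on rep ({..<r*t} \<rightarrow>\<^sub>E UNIV)"
proof (rule inj_onI)
  fix w w' assume w: "w \<in> {..<r*t} \<rightarrow>\<^sub>E UNIV" and w': "w' \<in> {..<r*t} \<rightarrow>\<^sub>E UNIV"
    and eq: "rep w = rep w'"
  have "\<forall>x\<in>A. ev (\<lambda>i j. aw w i j - aw w' i j) x = 0"
  proof
    fix x assume x: "x \<in> A"
    have "cw (aw w) x = cw (aw w') x" using eq rep_eq by metis
    thus "ev (\<lambda>i j. aw w i j - aw w' i j) x = 0" using x unfolding cw_def ev_diff by simp
  qed
  hence z: "\<forall>i<r. \<forall>j<t. aw w i j - aw w' i j = 0" by (rule ev_zero_imp)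
  show "w = w'"
  proof (rule PiE_ext[OF w w'])
    fix k assume "k \<in> {..<r*t}"
    hence "k mod r < r" "k div r < t" using r by (auto simp: less_mult_imp_div_less mult.commute)
    hence "aw w (k mod r) (k div r) = aw w' (k mod r) (k div r)" using z by simp
    thus "w k = w' k" unfolding aw_def by (metis div_mult_mod_eq)
  qed
qed

lemma rep_range: "range cw = rep ` ({..<r*t} \<rightarrow>\<^sub>E UNIV)"
proof
  show "rep ` ({..<r*t} \<rightarrow>\<^sub>E UNIV) \<subseteq> range cw" using rep_eq by auto
  show "range cw \<subseteq> rep ` ({..<r*t} \<rightarrow>\<^sub>E UNIV)"
  proof
    fix c assume "c \<in> range cw"
    then obtain a where c: "c = cw a" by auto
    define w where "w = restrict (\<lambda>k. a (k mod r) (k div r)) {..<r*t}"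
    have evq: "ev (aw w) x = ev a x" for x
      by (rule ev_cong) (simp add: aw_def w_def idx)
    have "rep w = c" unfolding rep_eq c cw_def evq by (rule refl)
    moreover have "w \<in> {..<r*t} \<rightarrow>\<^sub>E UNIV" unfolding w_def by simp
    ultimately show "c \<in> rep ` ({..<r*t} \<rightarrow>\<^sub>E UNIV)" by blast
  qed
qed

lemma free: "free_rank (range cw) (r*t)"
  unfolding free_rank_def
proof (intro exI conjI allI impI ballI)
  fix k show "cw (e k) \<in> range cw" by simp
next
  fix c assume c: "c \<in> range cw"
  then obtain w where w: "w \<in> {..<r*t} \<rightarrow>\<^sub>E UNIV" "c = rep w" using rep_range by auto
  show "\<exists>!w. w \<in> {..<r*t} \<rightarrow>\<^sub>E UNIV \<and> c = (\<lambda>\<alpha>. \<Sum>k<r*t. w k * cw (e k) \<alpha>)"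
  proof (rule ex1I[of _ w])
    show "w \<in> {..<r*t} \<rightarrow>\<^sub>E UNIV \<and> c = (\<lambda>\<alpha>. \<Sum>k<r*t. w k * cw (e k) \<alpha>)"
      using w unfolding rep_def by simp
  next
    fix w' assume "w' \<in> {..<r*t} \<rightarrow>\<^sub>E UNIV \<and> c = (\<lambda>\<alpha>. \<Sum>k<r*t. w' k * cw (e k) \<alpha>)"
    hence "w' \<in> {..<r*t} \<rightarrow>\<^sub>E UNIV" "rep w' = rep w" using w unfolding rep_def by auto
    thus "w' = w" using rep_inj w(1) by (meson inj_onD)
  qed
qed

lemma cardC: "card (range cw) = card (UNIV::'a set) ^ (r*t)"
  unfolding rep_range card_image[OF rep_inj] by (simp add: card_PiE)

lemma mindist: "min_dist A (range cw) = (r+1)*l - ((t - 1) * (r + 1) + (r - 1))"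
proof -
  define M where "M = {hamming_dist A c c' | c c'. c \<in> range cw \<and> c' \<in> range cw \<and> c \<noteq> c'}"
  define D where "D = (r+1)*l - ((t - 1) * (r + 1) + (r - 1))"
  have fin: "finite M"
  proof (rule finite_subset)
    show "M \<subseteq> {..card A}" unfolding M_def hamming_dist_def
      by (auto intro: card_mono)
  qed simp
  obtain a where a: "cw a \<noteq> cw (\<lambda>i j. 0)" "hamming_dist A (cw a) (cw (\<lambda>i j. 0)) \<le> D"
    using dist_upper unfolding D_def by blast
  have mem: "hamming_dist A (cw a) (cw (\<lambda>i j. 0)) \<in> M" unfolding M_def using a by blast
  have ge: "\<forall>m\<in>M. D \<le> m" unfolding M_def D_def using dist_lower by auto
  have "Min M \<le> D" using Min_le[OF fin mem] a by simp
  moreover have "M \<noteq> {}" using mem by auto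
  hence "D \<le> Min M" using Min_ge_iff[OF fin] ge by simp
  ultimately show ?thesis unfolding min_dist_def M_def[symmetric] D_def by simp
qed

end

lemma arith_final:
  fixes r l t :: nat
  assumes "r \<ge> 1" "t \<ge> 1" "t \<le> l"
  shows "int ((r+1)*l - ((t - 1) * (r + 1) + (r - 1))) = int ((r+1)*l) - int (r*t) - int (r*t div r) + 2"
proof -
  obtain r' t' where rt: "r = Suc r'" "t = Suc t'" using assms by (metis Suc_le_D One_nat_def)
  have "(r+1)*t \<le> (r+1)*l" by (rule mult_le_mono2) (rule assms(3))
  moreover have "(t - 1) * (r + 1) + (r - 1) \<le> (r+1)*t" using rt by (simp add: algebra_simps)
  ultimately have le: "(t - 1) * (r + 1) + (r - 1) \<le> (r+1)*l" by linarith
  have dv: "r*t div r = t" using assms(1) by simp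
  have e1: "int ((r+1)*l - ((t - 1) * (r + 1) + (r - 1))) = int ((r+1)*l) - int ((t - 1) * (r + 1) + (r - 1))"
    using le by (simp add: of_nat_diff)
  have e2: "int ((t - 1) * (r + 1) + (r - 1)) = int (r*t) + int t - 2" using rt by (simp add: algebra_simps)
  show ?thesis unfolding dv using e1 e2 by simp
qed

theorem mainTheorem6:
  fixes B :: "nat \<Rightarrow> 'a::{comm_ring_1, finite} set"
    and g :: "'a poly"
    and r l t :: nat
  assumes R: "chain_ring TYPE('a)"
    and r: "r \<ge> 1" and l: "l \<ge> 1"
    and disj: "\<forall>i\<in>{1..l}. \<forall>j\<in>{1..l}. i \<noteq> j \<longrightarrow> B i \<inter> B j = {}"
    and card: "\<forall>i\<in>{1..l}. card (B i) = r + 1"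
    and wc: "well_conditioned (\<Union>i\<in>{1..l}. B i)"
    and good: "good_poly r l B g"
    and t: "1 \<le> t" "t \<le> l"
  defines "A \<equiv> \<Union>i\<in>{1..l}. B i"
    and "n \<equiv> (r + 1) * l"
    and "K \<equiv> r * t"
    and "C \<equiv> tamo_barg_code (\<Union>i\<in>{1..l}. B i) r t g"
  shows "card A = n \<and> linear_code A C \<and> free_rank C K \<and> card C = card (UNIV::'a set) ^ K
     \<and> (\<forall>j\<in>{1..l}. \<forall>\<alpha>\<in>B j. recovering_set C \<alpha> (B j - {\<alpha>}))
     \<and> has_locality C A r
     \<and> int (min_dist A C) = int n - int K - int (K div r) + 2"
proof -
  have ud: "udiff (\<Union>i\<in>{1..l}. B i)" using wc_udiff[OF R wc] .
  interpret T: tb B g r l t using r l disj card ud good t by unfold_locales auto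
  have Aeq: "A = T.A" unfolding A_def T.A_def ..
  have Ceq: "C = range T.cw" using T.code_eq unfolding C_def T.A_def by simp
  show ?thesis
    unfolding Aeq Ceq n_def K_def
    using T.cardA T.linear T.free T.cardC T.recov T.locality T.mindist arith_final[OF r t] by auto
qed


end
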